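(* Let $N\ge2$, let $q\in\mathbb{C}$ with $[k]_q\ne0$ for $1\le k\le N$, and let $z_1,\dots,z_N$ lie in the open unit disk. Fix $\sigma\in\mathbb{S}_N$. For $1\le i\le N-1$ let $T_i:\mathbb{S}_N\to\mathbb{S}_N$ be the map $T_i\sigma=\tilde\sigma$ with $\tilde\sigma(N-i)=\sigma(N-i+1)$, $\tilde\sigma(N-i+1)=\sigma(N-i)$ and $\tilde\sigma(k)=\sigma(k)$ otherwise, and let $T_0$ be the identity. Then $$\sum_{i=0}^{N-1}q^i\,F^{(N)}_{(T_i\cdots T_0)\sigma}\Big|_{z_{\sigma(N)}=0}=F^{(N-1)}_{\sigma'},$$ where $F^{(N-1)}_{\sigma'}:=\Phi_{N-1}(z_{\sigma(1)},\dots,z_{\sigma(N-1)})$.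
   Context: $[k]_q=1+q+\cdots+q^{k-1}$, $[k]_q!=[1]_q\cdots[k]_q$. For $M\ge1$ and $w_1,\dots,w_M$ in the open unit disk define $t_i=\dfrac{w_1\cdots w_{M-i}}{1-w_1\cdots w_{M-i}}$ for $1\le i\le M-1$ and $$\Phi_M(w_1,\dots,w_M)=\frac{1}{1-w_1\cdots w_M}\sum_{(m_1,\dots,m_n)}\frac{1}{[m_1]_q!\cdots[m_n]_q!}\,t_{m_1}t_{m_1+m_2}\cdots t_{m_1+\cdots+m_{n-1}},$$ the sum running over all compositions $(m_1,\dots,m_n)$ of $M$ (ordered tuples of positive integers summing to $M$, any $n\ge1$; for $n=1$ the product of $t$'s is $1$). For $\sigma\in\mathbb{S}_M$ set $F^{(M)}_\sigma=\Phi_M(z_{\sigma(1)},\dots,z_{\sigma(M)})$. *)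

theory Defs
  imports Complex_Main "HOL-Combinatorics.Transposition" "HOL-Combinatorics.Permutations"
begin

definition qint :: "complex \<Rightarrow> nat \<Rightarrow> complex" where
  "qint q k = (\<Sum>j<k. q ^ j)"

definition qfact :: "complex \<Rightarrow> nat \<Rightarrow> complex" where
  "qfact q m = (\<Prod>k=1..m. qint q k)"

definition compositions :: "nat \<Rightarrow> nat list set" where
  "compositions M = {ms. (\<forall>m\<in>set ms. 0 < m) \<and> sum_list ms = M}"

definition tt :: "complex list \<Rightarrow> nat \<Rightarrow> complex" where
  "tt w i = (let P = prod_list (take (length w - i) w) in P / (1 - P))"

definition Phi :: "complex \<Rightarrow> complex list \<Rightarrow> complex" where
  "Phi q w = 1 / (1 - prod_list w) *
     (\<Sum>ms\<in>compositions (length w).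
        (1 / (\<Prod>m\<leftarrow>ms. qfact q m)) *
        (\<Prod>j\<in>{1..<length ms}. tt w (sum_list (take j ms))))"

definition F :: "complex \<Rightarrow> nat \<Rightarrow> (nat \<Rightarrow> complex) \<Rightarrow> (nat \<Rightarrow> nat) \<Rightarrow> complex" where
  "F q M z \<sigma> = Phi q (map (\<lambda>k. z (\<sigma> k)) [1..<M+1])"

definition Tmap :: "nat \<Rightarrow> nat \<Rightarrow> (nat \<Rightarrow> nat) \<Rightarrow> (nat \<Rightarrow> nat)" where
  "Tmap N i \<sigma> = (if i = 0 then \<sigma> else \<sigma> \<circ> transpose (N - i) (N - i + 1))"

fun Tcomp :: "nat \<Rightarrow> nat \<Rightarrow> (nat \<Rightarrow> nat) \<Rightarrow> (nat \<Rightarrow> nat)" where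
  "Tcomp N 0 \<sigma> = Tmap N 0 \<sigma>"
| "Tcomp N (Suc i) \<sigma> = Tmap N (Suc i) (Tcomp N i \<sigma>)"

end

theory Submission
  imports Defs
begin

definition SS :: "complex \<Rightarrow> (nat \<Rightarrow> complex) \<Rightarrow> nat \<Rightarrow> complex" where
  "SS q h M = (\<Sum>ms\<in>compositions M.
        (1 / (\<Prod>m\<leftarrow>ms. qfact q m)) *
        (\<Prod>j\<in>{1..<length ms}. h (M - sum_list (take j ms))))"

definition hw :: "complex list \<Rightarrow> nat \<Rightarrow> complex" where
  "hw w k = (let P = prod_list (take k w) in P / (1 - P))"

lemma Phi_SS: "Phi q w = 1 / (1 - prod_list w) * SS q (hw w) (length w)"
  unfolding Phi_def SS_def hw_def tt_def by simp

lemma comp0: "compositions 0 = {[]}"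
proof -
  have "ms = []" if "ms \<in> compositions 0" for ms
  proof -
    from that have "\<forall>m\<in>set ms. 0 < m" "sum_list ms = 0" by (auto simp: compositions_def)
    then show ?thesis by (cases ms) auto
  qed
  then show ?thesis by (auto simp: compositions_def)
qed

lemma comp_nonempty: "ms \<in> compositions M \<Longrightarrow> M > 0 \<Longrightarrow> ms \<noteq> []"
  by (auto simp: compositions_def)

lemma comp_Suc: "M > 0 \<Longrightarrow> compositions M = (\<lambda>(m,ms). m # ms) ` (SIGMA m:{1..M}. compositions (M - m))"
proof (intro equalityI subsetI)
  fix xs assume "xs \<in> compositions M" "M > 0"
  then obtain m ms where xs: "xs = m # ms" by (cases xs) (auto simp: compositions_def)
  with \<open>xs \<in> compositions M\<close> have "m \<in> {1..M}" "ms \<in> compositions (M - m)"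
    by (auto simp: compositions_def)
  then show "xs \<in> (\<lambda>(m,ms). m # ms) ` (SIGMA m:{1..M}. compositions (M - m))"
    using xs by force
next
  fix xs assume "xs \<in> (\<lambda>(m,ms). m # ms) ` (SIGMA m:{1..M}. compositions (M - m))"
  then show "xs \<in> compositions M" by (auto simp: compositions_def)
qed

lemma comp_finite: "finite (compositions M)"
proof (induction M rule: less_induct)
  case (less M)
  show ?case
  proof (cases "M = 0")
    case True then show ?thesis by (simp add: comp0)
  next
    case False
    then show ?thesis unfolding comp_Suc[OF \<open>M \<noteq> 0\<close>[unfolded neq0_conv]]
      by (intro finite_imageI finite_SigmaI) (auto intro: less)
  qed
qed

lemma prod_split:
  fixes M m :: nat and ms :: "nat list" and h :: "nat \<Rightarrow> complex"
  assumes "ms \<noteq> []"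
  shows "(\<Prod>j\<in>{1..<length (m#ms)}. h (M - sum_list (take j (m#ms))))
       = h (M - m) * (\<Prod>j\<in>{1..<length ms}. h ((M - m) - sum_list (take j ms)))"
proof -
  have "{1..<length (m#ms)} = insert 1 (Suc ` {1..<length ms})"
    using assms by (auto simp: image_Suc_atLeastLessThan)
  then have "(\<Prod>j\<in>{1..<length (m#ms)}. h (M - sum_list (take j (m#ms))))
     = h (M - sum_list (take 1 (m#ms))) * (\<Prod>j\<in>Suc ` {1..<length ms}. h (M - sum_list (take j (m#ms))))"
    by (simp only:) (rule prod.insert, auto)
  also have "\<dots> = h (M - m) * (\<Prod>j\<in>{1..<length ms}. h (M - sum_list (take (Suc j) (m#ms))))"
    by (subst prod.reindex) auto
  also have "\<dots> = h (M - m) * (\<Prod>j\<in>{1..<length ms}. h ((M - m) - sum_list (take j ms)))"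
    by (intro arg_cong[where f="(*) _"] prod.cong) auto
  finally show ?thesis .
qed

lemma SS_0: "SS q h 0 = 1"
  by (simp add: SS_def comp0)

lemma SS_rec:
  assumes "M > 0"
  shows "SS q h M = (\<Sum>m=1..M. 1 / qfact q m * (if m = M then 1 else h (M - m) * SS q h (M - m)))"
proof -
  let ?f = "\<lambda>M ms. (1 / (\<Prod>m\<leftarrow>ms. qfact q m)) *
        (\<Prod>j\<in>{1..<length ms}. h (M - sum_list (take j ms)))"
  have inj: "inj_on (\<lambda>(m,ms). m # ms) (SIGMA m:{1..M}. compositions (M - m))"
    by (auto simp: inj_on_def)
  have "SS q h M = (\<Sum>(m,ms)\<in>(SIGMA m:{1..M}. compositions (M - m)). ?f M (m # ms))"
    unfolding SS_def comp_Suc[OF assms] by (subst sum.reindex[OF inj]) (simp add: case_prod_beta)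
  also have "\<dots> = (\<Sum>m=1..M. \<Sum>ms\<in>compositions (M - m). ?f M (m # ms))"
    by (rule sum.Sigma[symmetric]) (auto simp: comp_finite)
  also have "\<dots> = (\<Sum>m=1..M. 1 / qfact q m * (if m = M then 1 else h (M - m) * SS q h (M - m)))"
  proof (rule sum.cong[OF refl])
    fix m assume m: "m \<in> {1..M}"
    show "(\<Sum>ms\<in>compositions (M - m). ?f M (m # ms)) = 1 / qfact q m * (if m = M then 1 else h (M - m) * SS q h (M - m))"
    proof (cases "m = M")
      case True then show ?thesis by (simp add: comp0)
    next
      case False
      then have pos: "M - m > 0" using m by auto
      have "(\<Sum>ms\<in>compositions (M - m). ?f M (m # ms)) = (\<Sum>ms\<in>compositions (M - m). 1 / qfact q m * (h (M - m) * ?f (M - m) ms))"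
      proof (rule sum.cong[OF refl])
        fix ms assume "ms \<in> compositions (M - m)"
        then have "ms \<noteq> []" using comp_nonempty pos by blast
        then show "?f M (m # ms) = 1 / qfact q m * (h (M - m) * ?f (M - m) ms)"
          unfolding prod_split[OF \<open>ms \<noteq> []\<close>] by simp
      qed
      also have "\<dots> = 1 / qfact q m * (h (M - m) * SS q h (M - m))"
        unfolding SS_def by (simp add: sum_distrib_left)
      finally show ?thesis using False by simp
    qed
  qed
  finally show ?thesis .
qed

lemma SS_local:
  "(\<And>k. 0 < k \<Longrightarrow> k < M \<Longrightarrow> h k = h' k) \<Longrightarrow> SS q h M = SS q h' M"
proof (induction M rule: less_induct)
  case (less M)
  show ?case
  proof (cases "M = 0")
    case True then show ?thesis by (simp add: SS_0)
  next
    case False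
    have "SS q h (M - m) = SS q h' (M - m)" if "m \<in> {1..M}" "m \<noteq> M" for m
      using that less by (intro less.IH) auto
    moreover have "h (M - m) = h' (M - m)" if "m \<in> {1..M}" "m \<noteq> M" for m
      using that less by auto
    ultimately show ?thesis using False
      by (auto simp: SS_rec intro!: sum.cong)
  qed
qed

lemma Tcomp_formula:
  "i < N \<Longrightarrow> Tcomp N i \<sigma> k = (if k < N - i then \<sigma> k else if k = N - i then \<sigma> N
      else if k \<le> N then \<sigma> (k - 1) else \<sigma> k)"
proof (induction i arbitrary: k)
  case 0
  then show ?case by (simp add: Tmap_def)
next
  case (Suc i)
  have e: "N - Suc i + 1 = N - i" using Suc.prems by simp
  show ?case using Suc.prems
    by (auto simp: Tmap_def e Suc.IH transpose_def)
qed

lemma norm_prod_list_le: "(\<forall>x\<in>set xs. norm (x::complex) < 1) \<Longrightarrow> norm (prod_list xs) \<le> 1"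
proof (induction xs)
  case Nil then show ?case by simp
next
  case (Cons x xs)
  then have "norm x \<le> 1" "norm (prod_list xs) \<le> 1" by auto
  then show ?case by (simp add: norm_mult mult_le_one)
qed

lemma norm_prod_list_lt: "(\<forall>x\<in>set xs. norm (x::complex) < 1) \<Longrightarrow> xs \<noteq> [] \<Longrightarrow> norm (prod_list xs) < 1"
proof (cases xs)
  case Nil
  assume "xs \<noteq> []" with Nil show ?thesis by simp
next
  case (Cons x ys)
  assume a: "\<forall>x\<in>set xs. norm (x::complex) < 1"
  then have "norm x < 1" "norm (prod_list ys) \<le> 1" using Cons norm_prod_list_le[of ys] by auto
  then have "norm x * norm (prod_list ys) < 1"
    by (metis mult_le_one norm_ge_zero order_le_less_trans less_eq_real_def mult_left_le)
  then show ?thesis using Cons by (simp add: norm_mult)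
qed

lemma take_map_upt: "k \<le> N \<Longrightarrow> take k (map f [1..<N+1]) = map f [1..<k+1]"
  by (simp add: take_map take_upt del: upt_Suc)

theorem lemma5:
  fixes N :: nat and q :: complex and z :: "nat \<Rightarrow> complex" and \<sigma> :: "nat \<Rightarrow> nat"
  assumes "N \<ge> 2"
    and "\<forall>k\<in>{1..N}. qint q k \<noteq> 0"
    and "\<forall>i\<in>{1..N}. norm (z i) < 1"
    and "\<sigma> permutes {1..N}"
  shows "(\<Sum>i<N. q ^ i * F q N (z(\<sigma> N := 0)) (Tcomp N i \<sigma>)) = F q (N - 1) z \<sigma>"
proof -
  note N2 = assms(1) and qi = assms(2) and zn = assms(3) and perm = assms(4)
  define L where "L = N - 1"
  have NL: "N = Suc L" using N2 L_def by simp
  have L1: "L \<ge> 1" using N2 L_def by simp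
  define z' where "z' = z(\<sigma> N := 0)"
  define f where "f = (\<lambda>k. z (\<sigma> k))"
  define u where "u = map f [1..<N]"
  define w where "w = (\<lambda>i. map (\<lambda>k. z' (Tcomp N i \<sigma> k)) [1..<N+1])"
  have lu: "length u = L" by (simp add: u_def L_def)
  have lw: "length (w i) = N" for i by (simp add: w_def)
  have sig_range: "\<sigma> k \<in> {1..N}" if "k \<in> {1..N}" for k
    using perm that by (simp only: permutes_in_image)
  have sig_inj: "\<sigma> k \<noteq> \<sigma> N" if "k \<in> {1..N}" "k \<noteq> N" for k
    using perm that permutes_inj unfolding inj_def by metis
  have u_take: "take k u = map f [1..<k+1]" if "k \<le> L" for k
    using that take_map_upt[of k L f] by (simp add: u_def NL)
  have w_take: "prod_list (take k (w i)) = (if k \<le> N - 1 - i then prod_list (take k u) else 0)"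
    if "i < N" "k \<le> N" for i k
  proof (cases "k \<le> N - 1 - i")
    case True
    have "take k (w i) = map (\<lambda>k. z' (Tcomp N i \<sigma> k)) [1..<k+1]"
      unfolding w_def by (rule take_map_upt[OF that(2)])
    also have "\<dots> = map f [1..<k+1]"
    proof (rule map_cong[OF refl])
      fix j assume "j \<in> set [1..<k+1]"
      then have j: "1 \<le> j" "j < N - i" using True that by auto
      then have "Tcomp N i \<sigma> j = \<sigma> j" using that by (simp add: Tcomp_formula)
      moreover have "\<sigma> j \<noteq> \<sigma> N" using j by (intro sig_inj) auto
      ultimately show "z' (Tcomp N i \<sigma> j) = f j" by (simp add: z'_def f_def)
    qed
    finally show ?thesis using True u_take[of k] L_def by simp
  next
    case False
    have "take k (w i) = map (\<lambda>k. z' (Tcomp N i \<sigma> k)) [1..<k+1]"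
      unfolding w_def by (rule take_map_upt[OF that(2)])
    moreover have "N - i \<in> set [1..<k+1]" using False that by auto
    moreover have "z' (Tcomp N i \<sigma> (N - i)) = 0" using that by (simp add: Tcomp_formula z'_def)
    ultimately have "0 \<in> set (take k (w i))" by force
    then show ?thesis using False by (simp add: prod_list_zero_iff)
  qed
  have hw_w: "hw (w i) k = (if k \<le> N - 1 - i then hw u k else 0)" if "i < N" "k \<le> N" for i k
    using w_take[OF that] by (simp add: hw_def Let_def)
  have pw: "prod_list (w i) = 0" if "i < N" for i
  proof -
    have "\<not> N \<le> N - 1 - i" using N2 by simp
    then show ?thesis using w_take[OF that order.refl] lw[of i] by simp
  qed
  define c where "c = (\<lambda>m. if m = N then 1 else hw u (N - m) * SS q (hw u) (N - m))"
  have SSw: "SS q (hw (w i)) N = (\<Sum>m=1..N. if i < m then 1 / qfact q m * c m else 0)"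
    if i: "i < N" for i
  proof -
    have "SS q (hw (w i)) N = (\<Sum>m=1..N. 1 / qfact q m * (if m = N then 1 else hw (w i) (N - m) * SS q (hw (w i)) (N - m)))"
      using N2 by (intro SS_rec) simp
    also have "\<dots> = (\<Sum>m=1..N. if i < m then 1 / qfact q m * c m else 0)"
    proof (rule sum.cong[OF refl])
      fix m assume m: "m \<in> {1..N}"
      show "1 / qfact q m * (if m = N then 1 else hw (w i) (N - m) * SS q (hw (w i)) (N - m)) = (if i < m then 1 / qfact q m * c m else 0)"
      proof (cases "m = N")
        case True then show ?thesis using i by (simp add: c_def)
      next
        case mN: False
        show ?thesis
        proof (cases "i < m")
          case True
          have le: "N - m \<le> N - 1 - i" using True by linarith
          have "hw (w i) (N - m) = hw u (N - m)" using le i m by (simp add: hw_w)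
          moreover have "SS q (hw (w i)) (N - m) = SS q (hw u) (N - m)"
            using le i m by (intro SS_local) (simp add: hw_w)
          ultimately show ?thesis using True mN by (simp add: c_def)
        next
          case False
          have gt: "\<not> N - m \<le> N - 1 - i" using False i m mN by auto
          have "hw (w i) (N - m) = 0" using gt i m by (simp add: hw_w)
          then show ?thesis using False mN by simp
        qed
      qed
    qed
    finally show ?thesis .
  qed
  have Fw: "F q N z' (Tcomp N i \<sigma>) = SS q (hw (w i)) N" if "i < N" for i
    unfolding F_def Phi_SS using pw[OF that] lw[of i] by (simp add: w_def)
  have qf: "qfact q m = qfact q (m - 1) * qint q m" if "m \<ge> 1" for m
    using that by (cases m) (auto simp: qfact_def prod.cl_ivl_Suc)
  have "(\<Sum>i<N. q ^ i * F q N z' (Tcomp N i \<sigma>))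
      = (\<Sum>i<N. \<Sum>m=1..N. if i < m then q ^ i * (1 / qfact q m * c m) else 0)"
    by (intro sum.cong refl) (simp add: Fw SSw sum_distrib_left if_distrib cong: if_cong)
  also have "\<dots> = (\<Sum>m=1..N. \<Sum>i<N. if i < m then q ^ i * (1 / qfact q m * c m) else 0)"
    by (rule sum.swap)
  also have "\<dots> = (\<Sum>m=1..N. qint q m * (1 / qfact q m * c m))"
  proof (rule sum.cong[OF refl])
    fix m assume m: "m \<in> {1..N}"
    have "(\<Sum>i<N. if i < m then q ^ i * (1 / qfact q m * c m) else 0)
        = (\<Sum>i\<in>{i\<in>{..<N}. i < m}. q ^ i * (1 / qfact q m * c m))"
      by (rule sum.inter_filter[symmetric]) simp
    also have "{i\<in>{..<N}. i < m} = {..<m}" using m by auto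
    finally show "(\<Sum>i<N. if i < m then q ^ i * (1 / qfact q m * c m) else 0) = qint q m * (1 / qfact q m * c m)"
      by (simp add: qint_def sum_distrib_right sum_divide_distrib)
  qed
  also have "\<dots> = (\<Sum>m=1..N. c m / qfact q (m - 1))"
  proof (rule sum.cong[OF refl])
    fix m assume m: "m \<in> {1..N}"
    then have "qint q m \<noteq> 0" using qi by auto
    then show "qint q m * (1 / qfact q m * c m) = c m / qfact q (m - 1)"
      using qf[of m] m by simp
  qed
  also have "\<dots> = c 1 / qfact q 0 + (\<Sum>m=Suc 1..Suc L. c m / qfact q (m - 1))"
    using NL by (simp add: sum.atLeast_Suc_atMost del: sum.cl_ivl_Suc)
  also have "(\<Sum>m=Suc 1..Suc L. c m / qfact q (m - 1)) = (\<Sum>m=1..L. c (Suc m) / qfact q m)"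
    by (subst sum.shift_bounds_cl_Suc_ivl) simp
  also have "\<dots> = SS q (hw u) L"
    using L1 by (subst SS_rec) (auto simp: c_def NL intro!: sum.cong)
  also have "c 1 = hw u L * SS q (hw u) L" using N2 by (simp add: c_def L_def)
  also have "qfact q 0 = 1" by (simp add: qfact_def)
  finally have lhs: "(\<Sum>i<N. q ^ i * F q N z' (Tcomp N i \<sigma>)) = (hw u L + 1) * SS q (hw u) L"
    by (simp add: algebra_simps)
  have "\<forall>x\<in>set u. norm x < 1" using zn sig_range by (auto simp: u_def f_def)
  moreover have "u \<noteq> []" using lu L1 by auto
  ultimately have "norm (prod_list u) < 1" by (rule norm_prod_list_lt)
  then have P1: "prod_list u \<noteq> 1" by auto
  have rhs: "F q (N - 1) z \<sigma> = 1 / (1 - prod_list u) * SS q (hw u) L"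
    unfolding F_def Phi_SS using NL lu by (simp add: u_def f_def)
  have "hw u L + 1 = 1 / (1 - prod_list u)"
    using P1 lu by (simp add: hw_def Let_def field_simps)
  then show ?thesis using lhs rhs by (simp add: z'_def)
qed

end
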